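(* Let $k\ge1$, $\alpha_i\in(1,2)$ and $l_i>0$ for $i=1,\dots,k$. For $\mathbf n=(n_1,\dots,n_k)$ let $$R_{\mathbf n}=\sum_{i=1}^k I_{n_1\cdots n_{i-1}}\otimes l_iR^{(\alpha_i)}_{n_i}\otimes I_{n_{i+1}\cdots n_k},\qquad \tau(R_{\mathbf n})=\sum_{i=1}^k I_{n_1\cdots n_{i-1}}\otimes l_i\,\tau\big(R^{(\alpha_i)}_{n_i}\big)\otimes I_{n_{i+1}\cdots n_k}.$$ Then for every nonzero $\mathbf z\in\mathbb R^{N(\mathbf n)}$, $$\frac12<\frac{\mathbf z^\top R_{\mathbf n}\mathbf z}{\mathbf z^\top\tau(R_{\mathbf n})\mathbf z}<\frac32 .$$
   Context: $N(\mathbf n)=n_1\cdots n_k$. $R^{(\alpha)}_n=T_n(r_\alpha)$ is the $n\times n$ symmetric Toeplitz matrix generated by $r_\alpha(\theta)=(2-2\cos\theta)^{\alpha/2}=|2\sin(\theta/2)|^\alpha$, i.e. $R^{(\alpha)}_n=[\rho^{(\alpha)}_{|i-j|}]_{i,j=1}^n$ with $\rho^{(\alpha)}_j=\frac{(-1)^j\Gamma(\alpha+1)}{\Gamma(\alpha/2-j+1)\Gamma(\alpha/2+j+1)}$. For a real symmetric Toeplitz matrix $T_n=[t_{|i-j|}]$, $\tau(T_n)=T_n-H_n$ with $H_n$ the Hankel matrix whose constant antidiagonals are $t_2,\dots,t_{n-1},0,0,0,t_{n-1},\dots,t_2$. *)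

theory Defs
  imports "HOL-Analysis.Analysis"
begin

text \<open>Matrices are represented as functions nat => nat => real, indexed from 0;
  only the entries with indices below the stated dimension are meaningful.\<close>

type_synonym mat = "nat \<Rightarrow> nat \<Rightarrow> real"

definition idm :: mat where
  "idm i j = (if i = j then 1 else 0)"

text \<open>Kronecker product A (x) B, where q is the dimension of B.\<close>
definition kron :: "mat \<Rightarrow> mat \<Rightarrow> nat \<Rightarrow> mat" where
  "kron A B q r c = A (r div q) (c div q) * B (r mod q) (c mod q)"

definition smat :: "real \<Rightarrow> mat \<Rightarrow> mat" where
  "smat a M i j = a * M i j"

definition madd :: "mat \<Rightarrow> mat \<Rightarrow> mat" where
  "madd A B i j = A i j + B i j"

definition msub :: "mat \<Rightarrow> mat \<Rightarrow> mat" where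
  "msub A B i j = A i j - B i j"

definition toep :: "(nat \<Rightarrow> real) \<Rightarrow> mat" where
  "toep t i j = t (if i \<le> j then j - i else i - j)"

text \<open>Hankel matrix H_n whose constant antidiagonals (0-indexed i+j = 0..2n-2) are
  t_2,...,t_{n-1},0,0,0,t_{n-1},...,t_2. With 1-based s = i+j+2 in 2..2n:
  s <= n-1 gives t_s, s >= n+3 gives t_{2n+2-s}, otherwise 0.\<close>
definition hank :: "(nat \<Rightarrow> real) \<Rightarrow> nat \<Rightarrow> mat" where
  "hank t n i j = (let s = i + j + 2 in
     if s \<le> n - 1 then t s else if n + 3 \<le> s then t (2 * n + 2 - s) else 0)"

definition tau_toep :: "(nat \<Rightarrow> real) \<Rightarrow> nat \<Rightarrow> mat" where
  "tau_toep t n = msub (toep t) (hank t n)"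

text \<open>Fourier coefficients of (2 - 2 cos theta)^(alpha/2).\<close>
definition rho :: "real \<Rightarrow> nat \<Rightarrow> real" where
  "rho \<alpha> j = (-1) ^ j * Gamma (\<alpha> + 1) /
      (Gamma (\<alpha> / 2 - real j + 1) * Gamma (\<alpha> / 2 + real j + 1))"

definition Rfrac :: "real \<Rightarrow> mat" where
  "Rfrac \<alpha> = toep (rho \<alpha>)"

definition tauRfrac :: "real \<Rightarrow> nat \<Rightarrow> mat" where
  "tauRfrac \<alpha> n = tau_toep (rho \<alpha>) n"

text \<open>I_{n_0...n_{i-1}} (x) M (x) I_{n_{i+1}...n_{k-1}} with M of size n_i (0-indexed).\<close>
definition kron_slot :: "nat \<Rightarrow> (nat \<Rightarrow> nat) \<Rightarrow> nat \<Rightarrow> mat \<Rightarrow> mat" where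
  "kron_slot k n i M = kron (kron idm M (n i)) idm (\<Prod>j\<in>{i<..<k}. n j)"

definition Nn :: "nat \<Rightarrow> (nat \<Rightarrow> nat) \<Rightarrow> nat" where
  "Nn k n = (\<Prod>j<k. n j)"

definition msum :: "nat \<Rightarrow> (nat \<Rightarrow> mat) \<Rightarrow> mat" where
  "msum k F r c = (\<Sum>i<k. F i r c)"

definition Rn :: "nat \<Rightarrow> (nat \<Rightarrow> nat) \<Rightarrow> (nat \<Rightarrow> real) \<Rightarrow> (nat \<Rightarrow> real) \<Rightarrow> mat" where
  "Rn k n \<alpha> l = msum k (\<lambda>i. kron_slot k n i (smat (l i) (Rfrac (\<alpha> i))))"

definition tauRn :: "nat \<Rightarrow> (nat \<Rightarrow> nat) \<Rightarrow> (nat \<Rightarrow> real) \<Rightarrow> (nat \<Rightarrow> real) \<Rightarrow> mat" where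
  "tauRn k n \<alpha> l = msum k (\<lambda>i. kron_slot k n i (smat (l i) (tauRfrac (\<alpha> i) (n i))))"

definition qform :: "nat \<Rightarrow> mat \<Rightarrow> (nat \<Rightarrow> real) \<Rightarrow> real" where
  "qform N M z = (\<Sum>r<N. \<Sum>c<N. z r * M r c * z c)"

end

theory Submission
  imports Defs
begin


lemma rho_alt: "rho a j = (-1)^j * Gamma (a+1) * rGamma (a/2 - real j + 1) * rGamma (a/2 + real j + 1)"
  unfolding rho_def by (simp add: rGamma_inverse_Gamma field_simps)

lemma rho_rec: "rho a (Suc j) * (real j + 1 + a/2) = rho a j * (real j - a/2)"
proof -
  define G where "G = Gamma (a+1)"
  define u where "u = rGamma (a/2 - real j + 1)"
  define v where "v = rGamma (a/2 + real j + 2)"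
  have e1: "rGamma (a/2 - real (Suc j) + 1) = (a/2 - real j) * u"
    using rGamma_plus1[of "a/2 - real j"] unfolding u_def by (simp add: algebra_simps)
  have e2: "rGamma (a/2 + real j + 1) = (a/2 + real j + 1) * v"
    using rGamma_plus1[of "a/2 + real j + 1"] unfolding v_def by (simp add: algebra_simps)
  have e3: "rGamma (a/2 + real (Suc j) + 1) = v" unfolding v_def by (simp add: algebra_simps)
  define w where "w = (-1)^j * G * u * v"
  have h1: "rho a (Suc j) = - (a/2 - real j) * w"
    unfolding rho_alt e1 e3 G_def w_def by (simp add: algebra_simps)
  have h2: "rho a j = (a/2 + real j + 1) * w"
    unfolding rho_alt e2 G_def u_def w_def by simp
  show ?thesis unfolding h1 h2 by (simp add: field_simps)
qed

lemma rho_step: assumes "a > 0" shows "rho a (Suc j) = rho a j * ((real j - a/2) / (real j + 1 + a/2))"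
proof -
  have d: "real j + 1 + a/2 > 0" using assms by simp
  show ?thesis using rho_rec[of a j] d by (simp add: eq_divide_eq)
qed

lemma rho0_pos: "a > 0 \<Longrightarrow> rho a 0 > 0"
  unfolding rho_def by simp

context fixes a :: real assumes a1: "1 < a" and a2: "a < 2" begin

lemma rho_neg: "j \<ge> 1 \<Longrightarrow> rho a j < 0"
proof (induction j)
  case 0 then show ?case by simp
next
  case (Suc j)
  have r: "rho a (Suc j) = rho a j * ((real j - a/2) / (real j + 1 + a/2))"
    using rho_step[of a j] a1 by simp
  show ?case
  proof (cases "j = 0")
    case True
    then show ?thesis using r rho0_pos[of a] a1 by (simp add: divide_neg_pos mult_pos_neg)
  next
    case False
    then have "rho a j < 0" using Suc by simp
    moreover have "real j \<ge> 1" using False by (cases j) auto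
    then have "real j - a/2 > 0" using a2 by simp
    ultimately show ?thesis using r a1 by (simp add: divide_neg_pos mult_neg_pos)
  qed
qed

lemma rho_mono: assumes "j \<ge> 1" "j \<le> i" shows "- rho a i \<le> - rho a j"
  using assms(2)
proof (induction i rule: dec_induct)
  case base then show ?case by simp
next
  case (step i)
  have r: "rho a (Suc i) = rho a i * ((real i - a/2) / (real i + 1 + a/2))"
    using rho_step[of a i] a1 by simp
  have n: "- rho a i \<ge> 0" using rho_neg[of i] assms(1) step(1) by simp
  have q1: "(real i - a/2) / (real i + 1 + a/2) \<le> 1" using a1 by (simp add: divide_le_eq)
  have "- rho a i * ((real i - a/2) / (real i + 1 + a/2)) \<le> - rho a i"
    by (rule mult_left_le[OF q1 n])
  then have "- rho a (Suc i) \<le> - rho a i" unfolding r by simp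
  then show ?case using step by simp
qed

lemma rho_psum: "rho a 0 + 2 * (\<Sum>k\<in>{1..M}. rho a k) = - (2/a) * ((real M + 1 + a/2) * rho a (Suc M))"
proof (induction M)
  case 0
  have e: "(1 + a/2) * rho a (Suc 0) = -(a/2) * rho a 0" using rho_rec[of a 0] by (simp add: algebra_simps)
  have "- (2/a) * ((real 0 + 1 + a/2) * rho a (Suc 0)) = -(2/a) * (-(a/2) * rho a 0)" using e by simp
  also have "\<dots> = rho a 0" using a1 by simp
  finally show ?case by simp
next
  case (Suc M)
  have r: "(real (Suc M) + 1 + a/2) * rho a (Suc (Suc M)) = (real M + 1 - a/2) * rho a (Suc M)"
    using rho_rec[of a "Suc M"] by (simp add: algebra_simps)
  have "rho a 0 + 2 * (\<Sum>k\<in>{1..Suc M}. rho a k) = rho a 0 + 2 * (\<Sum>k\<in>{1..M}. rho a k) + 2 * rho a (Suc M)"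
    by simp
  also have "\<dots> = - (2/a) * ((real M + 1 - a/2) * rho a (Suc M))" unfolding Suc
  proof -
    have an: "a \<noteq> 0" using a1 by simp
    have h: "(2/a) * (a/2) = 1" using an by simp
    from h an show "- (2/a) * ((real M + 1 + a/2) * rho a (Suc M)) + 2 * rho a (Suc M) = - (2/a) * ((real M + 1 - a/2) * rho a (Suc M))"
      by (simp add: algebra_simps)
  qed
  also have "\<dots> = - (2/a) * ((real (Suc M) + 1 + a/2) * rho a (Suc (Suc M)))"
    using r by simp
  finally show ?case .
qed

lemma rho_psum_pos: "rho a 0 + 2 * (\<Sum>k\<in>{1..M}. rho a k) > 0"
proof -
  have n: "rho a (Suc M) < 0" using rho_neg by simp
  have "(real M + 1 + a/2) * rho a (Suc M) < 0" using a1 n by (intro mult_pos_neg) auto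
  then have "(2/a) * ((real M + 1 + a/2) * rho a (Suc M)) < 0" by (rule mult_pos_neg[rotated]) (use a1 in auto)
  then show ?thesis unfolding rho_psum by simp
qed

end


lemma pair_ineq:
  fixes a b c x y :: real
  assumes "0 \<le> a" "0 \<le> b" "-1 \<le> c" "c \<le> 3" "b \<le> a \<or> x = y"
  shows "x * y * (c * b - a) \<ge> - (a + b) * (x^2 + y^2) / 2"
proof (cases "x = y")
  case True
  have "0 \<le> x^2 * ((c + 1) * b)" using assms by simp
  moreover have "2 * (x * y * (c * b - a)) + (a + b) * (x^2 + y^2) = 2 * (x^2 * ((c + 1) * b))"
    using True by (simp add: algebra_simps power2_eq_square)
  ultimately show ?thesis by linarith
next
  case False
  then have ba: "b \<le> a" using assms by simp
  define E where "E c' = 2 * (x * y * (c' * b - a)) + (a + b) * (x^2 + y^2)" for c'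
  have e1: "E (-1) = (a + b) * (x - y)^2" unfolding E_def by (simp add: algebra_simps power2_eq_square)
  have e3: "E 3 = (a - b) * (x - y)^2 + 2 * b * (x + y)^2" unfolding E_def by (simp add: algebra_simps power2_eq_square)
  have "E (-1) \<ge> 0" unfolding e1 using assms by simp
  moreover have "E 3 \<ge> 0" unfolding e3 using assms ba by simp
  moreover have "4 * E c = (3 - c) * E (-1) + (c + 1) * E 3" unfolding E_def by (simp add: algebra_simps)
  ultimately have "4 * E c \<ge> 0" using assms by (simp add: mult_nonneg_nonneg add_nonneg_nonneg)
  then have "E c \<ge> 0" by simp
  moreover have "- (a + b) * (x^2 + y^2) / 2 = - ((a + b) * (x^2 + y^2)) / 2" by (simp only: minus_mult_left)
  ultimately show ?thesis unfolding E_def by linarith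
qed

lemma sum_le_inj:
  fixes g :: "'b \<Rightarrow> real"
  assumes "finite A" "finite B" "inj_on \<phi> A" "\<phi> ` A \<subseteq> B" "\<And>k. k \<in> B \<Longrightarrow> g k \<ge> 0"
  shows "(\<Sum>j\<in>A. g (\<phi> j)) \<le> (\<Sum>k\<in>B. g k)"
proof -
  have "(\<Sum>j\<in>A. g (\<phi> j)) = (\<Sum>k\<in>\<phi> ` A. g k)" using sum.reindex[OF assms(3), of g] by (simp add: comp_def)
  also have "\<dots> \<le> (\<Sum>k\<in>B. g k)" using assms by (intro sum_mono2) auto
  finally show ?thesis .
qed



definition dst :: "nat \<Rightarrow> nat \<Rightarrow> nat" where "dst i j = (if i \<le> j then j - i else i - j)"
definition aa :: "(nat \<Rightarrow> real) \<Rightarrow> nat \<Rightarrow> nat \<Rightarrow> real" where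
  "aa t i j = (if i = j then 0 else - t (dst i j))"
definition bb :: "(nat \<Rightarrow> real) \<Rightarrow> nat \<Rightarrow> nat \<Rightarrow> nat \<Rightarrow> real" where
  "bb t m i j = - hank t m i j"

lemma toep_split: "toep t i j = (if i = j then t 0 else 0) - aa t i j"
  unfolding toep_def aa_def dst_def by auto

lemma aa_sym: "aa t i j = aa t j i"
  unfolding aa_def dst_def by auto

lemma bb_sym: "bb t m i j = bb t m j i"
  unfolding bb_def hank_def by (simp add: add.commute)

context fixes a :: real assumes a1: "1 < a" and a2: "a < 2" begin

lemma aa_nonneg: "aa (rho a) i j \<ge> 0"
  unfolding aa_def dst_def using rho_neg[OF a1 a2] by (auto simp: less_imp_le)

lemma bb_alt: assumes "i < m" "j < m"
  shows "bb (rho a) m i j = (if i + j + 2 \<le> m - 1 then - rho a (i + j + 2) else 0)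
                         + (if m + 3 \<le> i + j + 2 then - rho a (2 * m - i - j) else 0)"
proof -
  have "2 * m + 2 - (i + j + 2) = 2 * m - i - j" by simp
  then show ?thesis unfolding bb_def hank_def Let_def by auto
qed

lemma bb_nonneg: assumes "i < m" "j < m" shows "bb (rho a) m i j \<ge> 0"
proof -
  have "1 \<le> 2 * m - i - j" using assms by simp
  then show ?thesis unfolding bb_alt[OF assms] using rho_neg[OF a1 a2, of "i+j+2"] rho_neg[OF a1 a2, of "2 * m - i - j"]
    by auto
qed

lemma bb_le_aa: assumes "i < m" "j < m" "i \<noteq> j" shows "bb (rho a) m i j \<le> aa (rho a) i j"
proof -
  have d1: "1 \<le> dst i j" "dst i j \<le> i + j + 2" "dst i j \<le> 2 * m - i - j"
    using assms unfolding dst_def by auto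
  have "aa (rho a) i j = - rho a (dst i j)" unfolding aa_def using assms by simp
  moreover have "- rho a (i+j+2) \<le> - rho a (dst i j)" using rho_mono[OF a1 a2 d1(1) d1(2)] .
  moreover have "- rho a (2 * m - i - j) \<le> - rho a (dst i j)" using rho_mono[OF a1 a2 d1(1) d1(3)] .
  moreover have "0 \<le> - rho a (dst i j)" using rho_neg[OF a1 a2 d1(1)] by simp
  ultimately show ?thesis unfolding bb_alt[OF assms(1,2)] by auto
qed

end


lemma two_piece:
  fixes g :: "nat \<Rightarrow> real"
  assumes "finite A" "finite B" "finite S" "inj_on f A" "inj_on h B" "f ` A \<subseteq> S" "h ` B \<subseteq> S"
    "f ` A \<inter> h ` B = {}" "\<And>k. k \<in> S \<Longrightarrow> g k \<ge> 0"
  shows "(\<Sum>j\<in>A. g (f j)) + (\<Sum>j\<in>B. g (h j)) \<le> (\<Sum>k\<in>S. g k)"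
proof -
  have "(\<Sum>j\<in>A. g (f j)) = (\<Sum>k\<in>f ` A. g k)" using sum.reindex[OF assms(4), of g] by (simp add: comp_def)
  moreover have "(\<Sum>j\<in>B. g (h j)) = (\<Sum>k\<in>h ` B. g k)" using sum.reindex[OF assms(5), of g] by (simp add: comp_def)
  moreover have "(\<Sum>k\<in>f ` A. g k) + (\<Sum>k\<in>h ` B. g k) = (\<Sum>k\<in>f ` A \<union> h ` B. g k)"
    using assms by (simp add: sum.union_disjoint)
  moreover have "(\<Sum>k\<in>f ` A \<union> h ` B. g k) \<le> (\<Sum>k\<in>S. g k)"
    using assms by (intro sum_mono2) auto
  ultimately show ?thesis by linarith
qed

lemma sum_if_filter: "(\<Sum>j<(m::nat). if P j then f j else (0::real)) = (\<Sum>j\<in>{j\<in>{..<m}. P j}. f j)"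
  by (rule sum.inter_filter[symmetric]) (rule finite_lessThan)

context fixes a :: real assumes a1: "1 < a" and a2: "a < 2" begin

lemma margin: assumes "i < m"
  shows "(\<Sum>j<m. aa (rho a) i j + bb (rho a) m i j) < rho a 0"
proof -
  define g where "g k = - rho a k" for k
  define S where "S = {1..m-1}"
  have gS: "\<And>k. k \<in> S \<Longrightarrow> g k \<ge> 0" unfolding g_def S_def using rho_neg[OF a1 a2] by (auto simp: less_imp_le)
  define L where "L j = (if j < i then g (i - j) else 0)" for j
  define R where "R j = (if i < j then g (j - i) else 0)" for j
  define H1 where "H1 j = (if i + j + 2 \<le> m - 1 then g (i + j + 2) else 0)" for j
  define H2 where "H2 j = (if m + 3 \<le> i + j + 2 then g (2 * m - i - j) else 0)" for j
  have pw: "aa (rho a) i j + bb (rho a) m i j = (L j + H1 j) + (R j + H2 j)" if "j < m" for j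
    unfolding bb_alt[OF a1 a2 assms that] aa_def L_def R_def H1_def H2_def g_def dst_def by auto
  have s1: "(\<Sum>j<m. L j + H1 j) = (\<Sum>j\<in>{j\<in>{..<m}. j < i}. g (i - j)) + (\<Sum>j\<in>{j\<in>{..<m}. i + j + 2 \<le> m - 1}. g (i + j + 2))"
    unfolding L_def H1_def sum.distrib sum_if_filter by (rule refl)
  have s2: "(\<Sum>j<m. R j + H2 j) = (\<Sum>j\<in>{j\<in>{..<m}. i < j}. g (j - i)) + (\<Sum>j\<in>{j\<in>{..<m}. m + 3 \<le> i + j + 2}. g (2 * m - i - j))"
    unfolding R_def H2_def sum.distrib sum_if_filter by (rule refl)
  have b1: "(\<Sum>j<m. L j + H1 j) \<le> (\<Sum>k\<in>S. g k)"
    unfolding s1 S_def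
  proof (rule two_piece)
    show "inj_on (\<lambda>j. i - j) {j \<in> {..<m}. j < i}" by (auto simp: inj_on_def)
    show "inj_on (\<lambda>j. i + j + 2) {j \<in> {..<m}. i + j + 2 \<le> m - 1}" by (auto simp: inj_on_def)
  qed (use gS assms in \<open>auto simp: S_def\<close>)
  have b2: "(\<Sum>j<m. R j + H2 j) \<le> (\<Sum>k\<in>S. g k)"
    unfolding s2 S_def
  proof (rule two_piece)
    show "inj_on (\<lambda>j. j - i) {j \<in> {..<m}. i < j}" by (auto simp: inj_on_def)
    show "inj_on (\<lambda>j. 2 * m - i - j) {j \<in> {..<m}. m + 3 \<le> i + j + 2}" unfolding inj_on_def using assms by auto
  qed (use gS assms in \<open>auto simp: S_def\<close>)
  have "(\<Sum>j<m. aa (rho a) i j + bb (rho a) m i j) = (\<Sum>j<m. L j + H1 j) + (\<Sum>j<m. R j + H2 j)"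
    using pw by (simp add: sum.distrib)
  also have "\<dots> \<le> 2 * (\<Sum>k\<in>S. g k)" using b1 b2 by simp
  also have "\<dots> < rho a 0" using rho_psum_pos[OF a1 a2, of "m - 1"] unfolding g_def S_def
    by (simp add: sum_negf)
  finally show ?thesis .
qed

end


context fixes a :: real assumes a1: "1 < a" and a2: "a < 2" begin

lemma qform_1d:
  assumes c1: "-1 \<le> c" and c3: "c \<le> 3"
  shows "qform m (\<lambda>i j. toep (rho a) i j - c * hank (rho a) m i j) y
      \<ge> (\<Sum>i<m. (y i)^2 * (rho a 0 - (\<Sum>j<m. aa (rho a) i j + bb (rho a) m i j)))"
proof -
  define t where "t = rho a"
  define w where "w i j = aa t i j + bb t m i j" for i j
  have wsym: "w i j = w j i" for i j unfolding w_def using aa_sym bb_sym by metis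
  have pw: "y i * (toep t i j - c * hank t m i j) * y j
      = (if i = j then t 0 * (y i)^2 else 0) + y i * y j * (c * bb t m i j - aa t i j)" for i j
    unfolding toep_split bb_def by (simp add: algebra_simps power2_eq_square)
  have pr: "y i * y j * (c * bb t m i j - aa t i j) \<ge> - w i j * ((y i)^2 + (y j)^2) / 2"
    if "i < m" "j < m" for i j
  proof -
    have "bb t m i j \<le> aa t i j \<or> y i = y j"
      using bb_le_aa[OF a1 a2 that] unfolding t_def by (cases "i = j") auto
    then show ?thesis unfolding w_def
      using pair_ineq[OF aa_nonneg[OF a1 a2] bb_nonneg[OF a1 a2 that] c1 c3] unfolding t_def by blast
  qed
  have "qform m (\<lambda>i j. toep t i j - c * hank t m i j) y
      = (\<Sum>i<m. \<Sum>j<m. (if i = j then t 0 * (y i)^2 else 0) + y i * y j * (c * bb t m i j - aa t i j))"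
    unfolding qform_def pw ..
  also have "\<dots> = (\<Sum>i<m. t 0 * (y i)^2) + (\<Sum>i<m. \<Sum>j<m. y i * y j * (c * bb t m i j - aa t i j))"
    by (simp add: sum.distrib)
  also have "\<dots> \<ge> (\<Sum>i<m. t 0 * (y i)^2) + (\<Sum>i<m. \<Sum>j<m. - w i j * ((y i)^2 + (y j)^2) / 2)"
    using pr by (intro add_left_mono sum_mono) auto
  finally have ge: "qform m (\<lambda>i j. toep t i j - c * hank t m i j) y \<ge>
      (\<Sum>i<m. t 0 * (y i)^2) + (\<Sum>i<m. \<Sum>j<m. - w i j * ((y i)^2 + (y j)^2) / 2)" .
  have X: "(\<Sum>i<m. \<Sum>j<m. w i j * (y j)^2) = (\<Sum>i<m. \<Sum>j<m. w i j * (y i)^2)"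
  proof -
    have "(\<Sum>i<m. \<Sum>j<m. w i j * (y j)^2) = (\<Sum>j<m. \<Sum>i<m. w i j * (y j)^2)" by (rule sum.swap)
    also have "\<dots> = (\<Sum>j<m. \<Sum>i<m. w j i * (y j)^2)" using wsym by simp
    finally show ?thesis .
  qed
  have "(\<Sum>i<m. \<Sum>j<m. - w i j * ((y i)^2 + (y j)^2) / 2)
      = - ((\<Sum>i<m. \<Sum>j<m. w i j * (y i)^2) + (\<Sum>i<m. \<Sum>j<m. w i j * (y j)^2)) / 2"
  proof -
    have p: "- w i j * ((y i)^2 + (y j)^2) / 2 = (-(1/2)) * (w i j * (y i)^2) + (-(1/2)) * (w i j * (y j)^2)" for i j
      by (simp add: field_simps)
    show ?thesis unfolding p sum.distrib sum_distrib_left[symmetric] by simp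
  qed
  also have "\<dots> = - (\<Sum>i<m. \<Sum>j<m. w i j * (y i)^2)" unfolding X by simp
  finally have Y: "(\<Sum>i<m. \<Sum>j<m. - w i j * ((y i)^2 + (y j)^2) / 2) = - (\<Sum>i<m. \<Sum>j<m. w i j * (y i)^2)" .
  have Z: "(\<Sum>i<m. (y i)^2 * (t 0 - (\<Sum>j<m. w i j))) = (\<Sum>i<m. t 0 * (y i)^2) - (\<Sum>i<m. \<Sum>j<m. w i j * (y i)^2)"
    by (simp add: algebra_simps sum_subtractf sum_distrib_left sum_distrib_right)
  show ?thesis using ge unfolding Y t_def[symmetric] w_def[symmetric] Z by simp
qed

end


lemma sum_split_mult: "(\<Sum>r<A*B. f r) = (\<Sum>a<A. \<Sum>b<B. f (a*B + b)) " for f :: "nat \<Rightarrow> real"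
proof -
  have "(\<Sum>r<A*B. f r) = (\<Sum>a<A. \<Sum>r\<in>{a*B..<a*B+B}. f r)" using sum.nat_group[of f B A] by simp
  also have "\<dots> = (\<Sum>a<A. \<Sum>b<B. f (a*B + b))"
  proof (rule sum.cong[OF refl])
    fix a
    have "(\<Sum>r\<in>{0+a*B..<B+a*B}. f r) = (\<Sum>b\<in>{0..<B}. f (b + a*B))" by (rule sum.shift_bounds_nat_ivl)
    then show "(\<Sum>r\<in>{a*B..<a*B+B}. f r) = (\<Sum>b<B. f (a*B + b))" by (simp add: add.commute atLeast0LessThan)
  qed
  finally show ?thesis .
qed

lemma sum_split3: "(\<Sum>r<P*m*Q. f r) = (\<Sum>a<P. \<Sum>p<m. \<Sum>q<Q. f ((a*m+p)*Q + q))" for f :: "nat \<Rightarrow> real"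
  using sum_split_mult[where A="P*m" and B=Q and f=f] sum_split_mult[where A=P and B=m and f="\<lambda>u. \<Sum>q<Q. f (u*Q+q)"]
  by (simp add: algebra_simps)

lemma idx_div: fixes a p q m Q :: nat assumes "p < m" "q < Q"
  shows "((a*m+p)*Q+q) div Q div m = a" "((a*m+p)*Q+q) div Q mod m = p" "((a*m+p)*Q+q) mod Q = q"
proof -
  have Q: "0 < Q" using assms by simp
  have d: "((a*m+p)*Q+q) div Q = a*m+p" using Q assms by simp
  show "((a*m+p)*Q+q) div Q div m = a" unfolding d using assms by simp
  show "((a*m+p)*Q+q) div Q mod m = p" unfolding d using assms by simp
  show "((a*m+p)*Q+q) mod Q = q" using assms by simp
qed

lemma sum_idm: "a < P \<Longrightarrow> (\<Sum>a'<P. idm a a' * f a') = f a"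
proof -
  assume "a < P"
  have "(\<Sum>a'<P. idm a a' * f a') = (\<Sum>a'<P. if a = a' then f a' else 0)"
    unfolding idm_def by (intro sum.cong refl) simp
  also have "\<dots> = f a" using \<open>a < P\<close> by (simp add: sum.delta)
  finally show ?thesis .
qed

lemma kron_qform:
  "qform (P*m*Q) (kron (kron idm M m) idm Q) z = (\<Sum>a<P. \<Sum>q<Q. qform m M (\<lambda>p. z ((a*m+p)*Q+q)))"
proof -
  define K where "K = kron (kron idm M m) idm Q"
  have Kv: "K ((a*m+p)*Q+q) ((a'*m+p')*Q+q') = idm a a' * (M p p' * idm q q')"
    if "p < m" "q < Q" "p' < m" "q' < Q" for a p q a' p' q'
    unfolding K_def kron_def idx_div[OF that(1,2)] idx_div[OF that(3,4)] by simp
  have inner: "(\<Sum>c<P*m*Q. z ((a*m+p)*Q+q) * K ((a*m+p)*Q+q) c * z c)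
      = (\<Sum>p'<m. z ((a*m+p)*Q+q) * M p p' * z ((a*m+p')*Q+q))"
    if "a < P" "p < m" "q < Q" for a p q
  proof -
    have "(\<Sum>c<P*m*Q. z ((a*m+p)*Q+q) * K ((a*m+p)*Q+q) c * z c)
      = (\<Sum>a'<P. \<Sum>p'<m. \<Sum>q'<Q. z ((a*m+p)*Q+q) * K ((a*m+p)*Q+q) ((a'*m+p')*Q+q') * z ((a'*m+p')*Q+q'))"
      by (rule sum_split3)
    also have "\<dots> = (\<Sum>a'<P. \<Sum>p'<m. \<Sum>q'<Q. idm a a' * (idm q q' * (z ((a*m+p)*Q+q) * M p p' * z ((a'*m+p')*Q+q'))))"
      apply (intro sum.cong refl)
      apply (subst Kv)
      using that by (auto simp: algebra_simps)
    also have "\<dots> = (\<Sum>a'<P. idm a a' * (\<Sum>p'<m. \<Sum>q'<Q. idm q q' * (z ((a*m+p)*Q+q) * M p p' * z ((a'*m+p')*Q+q'))))"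
      by (simp only: sum_distrib_left)
    also have "\<dots> = (\<Sum>p'<m. \<Sum>q'<Q. idm q q' * (z ((a*m+p)*Q+q) * M p p' * z ((a*m+p')*Q+q')))"
      by (rule sum_idm[OF that(1)])
    also have "\<dots> = (\<Sum>p'<m. z ((a*m+p)*Q+q) * M p p' * z ((a*m+p')*Q+q))"
      by (intro sum.cong refl) (rule sum_idm[OF that(3)])
    finally show ?thesis .
  qed
  have "qform (P*m*Q) K z = (\<Sum>a<P. \<Sum>p<m. \<Sum>q<Q. \<Sum>c<P*m*Q. z ((a*m+p)*Q+q) * K ((a*m+p)*Q+q) c * z c)"
    unfolding qform_def by (rule sum_split3)
  also have "\<dots> = (\<Sum>a<P. \<Sum>p<m. \<Sum>q<Q. \<Sum>p'<m. z ((a*m+p)*Q+q) * M p p' * z ((a*m+p')*Q+q))"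
    by (rule sum.cong[OF refl], rule sum.cong[OF refl], rule sum.cong[OF refl], rule inner) auto
  also have "\<dots> = (\<Sum>a<P. \<Sum>q<Q. \<Sum>p<m. \<Sum>p'<m. z ((a*m+p)*Q+q) * M p p' * z ((a*m+p')*Q+q))"
    by (rule sum.cong[OF refl], rule sum.swap)
  also have "\<dots> = (\<Sum>a<P. \<Sum>q<Q. qform m M (\<lambda>p. z ((a*m+p)*Q+q)))"
    unfolding qform_def ..
  finally show ?thesis unfolding K_def .
qed

lemma kron_lower:
  assumes "\<And>y. qform m M y \<ge> \<mu> * (\<Sum>p<m. (y p)^2)"
  shows "qform (P*m*Q) (kron (kron idm M m) idm Q) z \<ge> \<mu> * (\<Sum>r<P*m*Q. (z r)^2)"
proof -
  have "\<mu> * (\<Sum>r<P*m*Q. (z r)^2) = (\<Sum>a<P. \<Sum>q<Q. \<mu> * (\<Sum>p<m. (z ((a*m+p)*Q+q))^2))"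
    unfolding sum_split3 by (simp add: sum_distrib_left sum.swap[of _ "{..<m}" "{..<Q}"])
  also have "\<dots> \<le> (\<Sum>a<P. \<Sum>q<Q. qform m M (\<lambda>p. z ((a*m+p)*Q+q)))"
    using assms by (intro sum_mono) auto
  finally show ?thesis unfolding kron_qform .
qed



lemma pos_1d:
  assumes a1: "1 < a" and a2: "a < 2" and c1: "-1 \<le> c" and c3: "c \<le> 3"
  shows "\<exists>\<mu>>0. \<forall>y. qform m (\<lambda>i j. toep (rho a) i j - c * hank (rho a) m i j) y \<ge> \<mu> * (\<Sum>p<m. (y p)^2)"
proof (cases "m = 0")
  case True
  then show ?thesis by (intro exI[of _ 1]) (simp add: qform_def)
next
  case False
  define e where "e i = rho a 0 - (\<Sum>j<m. aa (rho a) i j + bb (rho a) m i j)" for i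
  define \<mu> where "\<mu> = Min (e ` {..<m})"
  have epos: "e i > 0" if "i < m" for i using margin[OF a1 a2 that] unfolding e_def by simp
  have "0 \<in> {..<m}" using False by simp
  then have ne: "e ` {..<m} \<noteq> {}" by blast
  have mupos: "\<mu> > 0" unfolding \<mu>_def using ne epos by (subst Min_gr_iff) auto
  have mule: "\<mu> \<le> e i" if "i < m" for i unfolding \<mu>_def using that by (intro Min_le) auto
  show ?thesis
  proof (intro exI[of _ \<mu>] conjI allI mupos)
    fix y
    have "\<mu> * (\<Sum>p<m. (y p)^2) = (\<Sum>i<m. (y i)^2 * \<mu>)" by (simp add: sum_distrib_left mult.commute)
    also have "\<dots> \<le> (\<Sum>i<m. (y i)^2 * e i)" using mule by (intro sum_mono mult_left_mono) auto
    also have "\<dots> \<le> qform m (\<lambda>i j. toep (rho a) i j - c * hank (rho a) m i j) y"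
      using qform_1d[OF a1 a2 c1 c3, where m=m and y=y] unfolding e_def by simp
    finally show "\<mu> * (\<Sum>p<m. (y p)^2) \<le> qform m (\<lambda>i j. toep (rho a) i j - c * hank (rho a) m i j) y" .
  qed
qed

lemma Nn_split: assumes "i < k"
  shows "Nn k n = (\<Prod>j<i. n j) * n i * (\<Prod>j\<in>{i<..<k}. n j)"
proof -
  have "{..<k} = {..<i} \<union> ({i} \<union> {i<..<k})" using assms by auto
  then have "Nn k n = (\<Prod>j\<in>{..<i} \<union> ({i} \<union> {i<..<k}). n j)" unfolding Nn_def by simp
  also have "\<dots> = (\<Prod>j<i. n j) * (n i * (\<Prod>j\<in>{i<..<k}. n j))"
    by (subst prod.union_disjoint) (auto simp: prod.union_disjoint)
  finally show ?thesis by (simp add: mult.assoc)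
qed

lemma kron_slot_lin:
  "kron_slot k n i (\<lambda>a b. x * A a b + y * B a b) r c = x * kron_slot k n i A r c + y * kron_slot k n i B r c"
  unfolding kron_slot_def kron_def by (simp add: algebra_simps)

lemma qform_lin:
  "qform N (\<lambda>r c. x * F r c + y * G r c) z = x * qform N F z + y * qform N G z"
  unfolding qform_def by (simp add: algebra_simps sum.distrib sum_distrib_left)

lemma qform_msum: "qform N (msum k F) z = (\<Sum>i<k. qform N (F i) z)"
  unfolding qform_def msum_def by (simp add: sum_distrib_left sum_distrib_right sum.swap[of _ "{..<k}"])

lemma slot_pos:
  assumes "i < k" and a1: "1 < a" and a2: "a < 2" and c1: "-1 \<le> c" and c3: "c \<le> 3"
    and nz: "\<exists>r < Nn k n. z r \<noteq> 0"
  shows "qform (Nn k n) (kron_slot k n i (toep (rho a))) z - c * qform (Nn k n) (kron_slot k n i (hank (rho a) (n i))) z > 0"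
proof -
  obtain \<mu> where mu: "\<mu> > 0" and h: "\<And>y. qform (n i) (\<lambda>p q. toep (rho a) p q - c * hank (rho a) (n i) p q) y \<ge> \<mu> * (\<Sum>p<n i. (y p)^2)"
    using pos_1d[OF a1 a2 c1 c3, of "n i"] by blast
  define P where "P = (\<Prod>j<i. n j)"
  define Q where "Q = (\<Prod>j\<in>{i<..<k}. n j)"
  have N: "Nn k n = P * n i * Q" unfolding P_def Q_def using Nn_split[OF assms(1)] .
  have E: "(\<Sum>r<Nn k n. (z r)^2) > 0"
  proof -
    obtain r where "r < Nn k n" "z r \<noteq> 0" using nz by blast
    then have "(z r)^2 \<le> (\<Sum>r<Nn k n. (z r)^2)" by (intro member_le_sum) auto
    moreover have "(z r)^2 > 0" using \<open>z r \<noteq> 0\<close> by simp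
    ultimately show ?thesis by linarith
  qed
  have "\<mu> * (\<Sum>r<Nn k n. (z r)^2) \<le> qform (Nn k n) (kron_slot k n i (\<lambda>p q. toep (rho a) p q - c * hank (rho a) (n i) p q)) z"
    unfolding N kron_slot_def Q_def[symmetric] by (rule kron_lower[OF h])
  also have "\<dots> = qform (Nn k n) (kron_slot k n i (toep (rho a))) z - c * qform (Nn k n) (kron_slot k n i (hank (rho a) (n i))) z"
  proof -
    have eq: "kron_slot k n i (\<lambda>p q. toep (rho a) p q - c * hank (rho a) (n i) p q)
        = (\<lambda>r s. 1 * kron_slot k n i (toep (rho a)) r s + (-c) * kron_slot k n i (hank (rho a) (n i)) r s)"
      using kron_slot_lin[of k n i 1 "toep (rho a)" "-c" "hank (rho a) (n i)"] by (auto simp: fun_eq_iff)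
    show ?thesis unfolding eq qform_lin by simp
  qed
  finally show ?thesis using mu E by (smt (verit) mult_pos_pos)
qed



theorem lemma6:
  fixes k :: nat and n :: "nat \<Rightarrow> nat" and \<alpha> l :: "nat \<Rightarrow> real" and z :: "nat \<Rightarrow> real"
  assumes "k \<ge> 1"
    and "\<And>i. i < k \<Longrightarrow> 1 < \<alpha> i \<and> \<alpha> i < 2"
    and "\<And>i. i < k \<Longrightarrow> l i > 0"
    and "\<exists>r < Nn k n. z r \<noteq> 0"
  shows "1/2 < qform (Nn k n) (Rn k n \<alpha> l) z / qform (Nn k n) (tauRn k n \<alpha> l) z
       \<and> qform (Nn k n) (Rn k n \<alpha> l) z / qform (Nn k n) (tauRn k n \<alpha> l) z < 3/2"
proof -
  define N where "N = Nn k n"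
  define TT where "TT i = qform N (kron_slot k n i (toep (rho (\<alpha> i)))) z" for i
  define HH where "HH i = qform N (kron_slot k n i (hank (rho (\<alpha> i)) (n i))) z" for i
  have key: "TT i - c * HH i > 0" if "i < k" "-1 \<le> c" "c \<le> 3" for i c
    unfolding TT_def HH_def N_def
    using slot_pos[OF that(1) _ _ that(2,3) assms(4)] assms(2)[OF that(1)] by blast
  have sm: "qform N (kron_slot k n i (smat x M)) z = x * qform N (kron_slot k n i M) z" for i x M
  proof -
    have e2: "kron_slot k n i (smat x M) = (\<lambda>r s. x * kron_slot k n i M r s + 0 * kron_slot k n i M r s)"
    proof -
      have e: "smat x M = (\<lambda>a b. x * M a b + 0 * M a b)" by (simp add: smat_def fun_eq_iff)
      show ?thesis unfolding e fun_eq_iff kron_slot_lin by simp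
    qed
    show ?thesis unfolding e2 qform_lin by simp
  qed
  have ms: "qform N (kron_slot k n i (msub A B)) z = qform N (kron_slot k n i A) z - qform N (kron_slot k n i B) z" for i A B
  proof -
    have e2: "kron_slot k n i (msub A B) = (\<lambda>r s. 1 * kron_slot k n i A r s + (-1) * kron_slot k n i B r s)"
    proof -
      have e: "msub A B = (\<lambda>a b. 1 * A a b + (-1) * B a b)" by (simp add: msub_def fun_eq_iff)
      show ?thesis unfolding e fun_eq_iff kron_slot_lin by simp
    qed
    show ?thesis unfolding e2 qform_lin by simp
  qed
  have R: "qform N (Rn k n \<alpha> l) z = (\<Sum>i<k. l i * TT i)"
    unfolding Rn_def qform_msum sm TT_def Rfrac_def ..
  have D: "qform N (tauRn k n \<alpha> l) z = (\<Sum>i<k. l i * (TT i - HH i))"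
    unfolding tauRn_def qform_msum sm tauRfrac_def tau_toep_def ms TT_def HH_def ..
  have "0 \<in> {..<k}" using assms(1) by simp
  then have ne: "{..<k} \<noteq> {}" by blast
  have Dpos: "(\<Sum>i<k. l i * (TT i - HH i)) > 0"
    using key[of _ 1] assms(3) by (intro sum_pos ne) auto
  have lo: "(\<Sum>i<k. l i * (TT i - (-1) * HH i)) > 0"
    using key[of _ "-1"] assms(3) by (intro sum_pos ne) auto
  have hi: "(\<Sum>i<k. l i * (TT i - 3 * HH i)) > 0"
    using key[of _ 3] assms(3) by (intro sum_pos ne) auto
  have lo': "2 * (\<Sum>i<k. l i * TT i) - (\<Sum>i<k. l i * (TT i - HH i)) = (\<Sum>i<k. l i * (TT i - (-1) * HH i))"
    by (simp add: sum_distrib_left sum_subtractf[symmetric] algebra_simps)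
  have hi': "3 * (\<Sum>i<k. l i * (TT i - HH i)) - 2 * (\<Sum>i<k. l i * TT i) = (\<Sum>i<k. l i * (TT i - 3 * HH i))"
    by (simp add: sum_distrib_left sum_subtractf[symmetric] algebra_simps)
  define X where "X = (\<Sum>i<k. l i * TT i)"
  define Y where "Y = (\<Sum>i<k. l i * (TT i - HH i))"
  have "Y > 0" "2 * X - Y > 0" "3 * Y - 2 * X > 0"
    using Dpos lo lo' hi hi' unfolding X_def Y_def by auto
  then have "1/2 < X / Y \<and> X / Y < 3/2" by (simp add: field_simps)
  then show ?thesis unfolding N_def[symmetric] R D X_def Y_def .
qed

end
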